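(* Let $\mathcal{Y}\in\mathbb{Z}^{n_1\times\cdots\times n_d}$ be a sample from $\operatorname{TBM}(\rho,\mathcal{S},z_1,\dots,z_d)$ whose entries are sub-Poisson with dispersion parameter $\rho$. Let $1\le d'<d$ and define the aggregate tensor $\mathcal{Y}'\in\mathbb{Z}^{n_1\times\cdots\times n_{d'}}$ by $\mathcal{Y}'_{i_1\dots i_{d'}} = \sum_{i_{d'+1},\dots,i_d}\mathcal{Y}_{i_1\dots i_d}$. Then $\mathcal{Y}'$ is a sample from $\operatorname{TBM}(\rho',\mathcal{S}',z_1,\dots,z_{d'})$ with density $\rho' = n_{d'+1}\cdots n_d\,\rho$ and core tensor $$\mathcal{S}'_{j_1\dots j_{d'}} = \frac{1}{n_{d'+1}\cdots n_d}\sum_{i_{d'+1},\dots,i_d}\mathcal{S}_{j_1\dots j_{d'} z_{d'+1}(i_{d'+1})\dots z_d(i_d)},$$ and the entries of $\mathcal{Y}'$ are sub-Poisson with dispersion parameter $\rho'$.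
   Context: Tensor block model: $\operatorname{TBM}(\rho,\mathcal{S},z_1,\dots,z_d)$ with dimensions $n_1,\dots,n_d$ and cluster counts $r_1,\dots,r_d$ is the law of a random tensor $\mathcal{Y}\in\mathbb{Z}^{n_1\times\cdots\times n_d}$ with independent entries and $\mathbb{E}\mathcal{Y}_{i_1\dots i_d} = \rho\,\mathcal{S}_{z_1(i_1)\dots z_d(i_d)}$, where $\rho\ge 0$, $\mathcal{S}\in[-1,1]^{r_1\times\cdots\times r_d}$, and $z_j\in[r_j]^{n_j}$ (here $[r]=\{1,\dots,r\}$). Sub-Poisson: a real integrable random variable $X$ is sub-Poisson with dispersion parameter $\rho$ if $\mathbb{E}e^{\lambda(X-\mathbb{E}X)} \le \exp\{\rho(e^{|\lambda|}-1-|\lambda|)\}$ for all $\lambda\in\mathbb{R}$ and $\mathbb{E}|X-\mathbb{E}X|\le\rho$. *)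

theory Defs
  imports "HOL-Probability.Probability"
begin

text \<open>Tensor indices are lists of 0-based positions: an index of an order-d tensor with
  dimensions n 0, ..., n (d-1) is a list of length d whose k-th entry is < n k.  Cluster labels are 0-based: z k i < r k.\<close>

definition idxs :: "(nat \<Rightarrow> nat) \<Rightarrow> nat \<Rightarrow> nat list set" where
  "idxs n d = {xs. length xs = d \<and> (\<forall>k<d. xs ! k < n k)}"

definition zlab :: "(nat \<Rightarrow> nat \<Rightarrow> nat) \<Rightarrow> nat list \<Rightarrow> nat list" where
  "zlab z i = map (\<lambda>k. z k (i ! k)) [0..<length i]"

definition TBM :: "'a measure \<Rightarrow> nat \<Rightarrow> (nat \<Rightarrow> nat) \<Rightarrow> (nat \<Rightarrow> nat) \<Rightarrow> real
    \<Rightarrow> (nat list \<Rightarrow> real) \<Rightarrow> (nat \<Rightarrow> nat \<Rightarrow> nat) \<Rightarrow> ('a \<Rightarrow> nat list \<Rightarrow> int) \<Rightarrow> bool" where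
  "TBM M d n r \<rho> S z Y \<longleftrightarrow>
     0 \<le> \<rho> \<and>
     (\<forall>j\<in>idxs r d. S j \<in> {-1..1}) \<and>
     (\<forall>k<d. \<forall>i<n k. z k i < r k) \<and>
     prob_space.indep_vars M (\<lambda>_. count_space UNIV) (\<lambda>i x. Y x i) (idxs n d) \<and>
     (\<forall>i\<in>idxs n d. integrable M (\<lambda>x. real_of_int (Y x i)) \<and>
        (\<integral>x. real_of_int (Y x i) \<partial>M) = \<rho> * S (zlab z i))"

definition sub_Poisson :: "'a measure \<Rightarrow> ('a \<Rightarrow> real) \<Rightarrow> real \<Rightarrow> bool" where
  "sub_Poisson M X \<rho> \<longleftrightarrow>
     integrable M X \<and>
     (\<forall>l::real. (\<integral>\<^sup>+x. ennreal (exp (l * (X x - (\<integral>y. X y \<partial>M)))) \<partial>M)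
                  \<le> ennreal (exp (\<rho> * (exp \<bar>l\<bar> - 1 - \<bar>l\<bar>)))) \<and>
     (\<integral>x. \<bar>X x - (\<integral>y. X y \<partial>M)\<bar> \<partial>M) \<le> \<rho>"

end

theory Submission
  imports Defs
begin


lemma idxs_Suc: "idxs n (Suc d) = (\<lambda>(xs,a). xs @ [a]) ` (idxs n d \<times> {..<n d})"
proof (rule set_eqI, rule iffI)
  fix ys assume "ys \<in> idxs n (Suc d)"
  then have l: "length ys = Suc d" and b: "\<forall>k<Suc d. ys ! k < n k" by (auto simp: idxs_def)
  then obtain xs a where ys: "ys = xs @ [a]" by (metis length_Suc_conv_rev)
  have lx: "length xs = d" using l ys by simp
  have "xs \<in> idxs n d"
    unfolding idxs_def
  proof (intro CollectI conjI allI impI)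
    fix k assume "k < d"
    then have "ys ! k < n k" using b by simp
    then show "xs ! k < n k" using ys lx \<open>k < d\<close> by (simp add: nth_append)
  qed (rule lx)
  moreover have "ys ! d < n d" using b by simp
  then have "a < n d" using ys lx by (metis nth_append_length)
  ultimately show "ys \<in> (\<lambda>(xs,a). xs @ [a]) ` (idxs n d \<times> {..<n d})"
    using ys by (intro image_eqI[where x="(xs,a)"]) auto
next
  fix ys assume "ys \<in> (\<lambda>(xs,a). xs @ [a]) ` (idxs n d \<times> {..<n d})"
  then show "ys \<in> idxs n (Suc d)"
    by (auto simp: idxs_def nth_append less_Suc_eq)
qed

lemma idxs_card: "finite (idxs n d) \<and> card (idxs n d) = (\<Prod>k<d. n k)"
proof (induction d)
  case 0
  have "idxs n 0 = {[]}" by (auto simp: idxs_def)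
  then show ?case by simp
next
  case (Suc d)
  have inj: "inj_on (\<lambda>(xs,a). xs @ [a]) (idxs n d \<times> {..<n d})"
    by (auto simp: inj_on_def)
  show ?case unfolding idxs_Suc using Suc inj
    by (simp add: card_image card_cartesian_product)
qed

lemma idxs_append:
  assumes "i \<in> idxs n d'" "t \<in> idxs (\<lambda>k. n (d' + k)) (d - d')" "d' \<le> d"
  shows "i @ t \<in> idxs n d"
proof -
  have li: "length i = d'" and lt: "length t = d - d'" using assms by (auto simp: idxs_def)
  show ?thesis unfolding idxs_def
  proof (intro CollectI conjI allI impI)
    show "length (i @ t) = d" using li lt assms(3) by simp
    fix k assume k: "k < d"
    show "(i @ t) ! k < n k"
    proof (cases "k < d'")
      case True then show ?thesis using assms(1) li by (simp add: nth_append idxs_def)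
    next
      case False
      then have "k - d' < d - d'" using k by simp
      then have "t ! (k - d') < n (d' + (k - d'))" using assms(2) by (auto simp: idxs_def)
      then show ?thesis using False li by (simp add: nth_append)
    qed
  qed
qed

lemma zlab_append: "zlab z (i @ t) = zlab z i @ map (\<lambda>k. z (length i + k) (t ! k)) [0..<length t]"
proof -
  have u: "[0..<length i + length t] = [0..<length i] @ map (\<lambda>k. length i + k) [0..<length t]"
  proof -
    have "[0..<length i + length t] = [0..<length i] @ [length i..<length i + length t]"
      by (rule upt_add_eq_append) simp
    moreover have "map (\<lambda>k. length i + k) [0..<length t] = [length i..<length i + length t]"
      using map_add_upt[of "length i" "length t"] by (simp only: add.commute)
    ultimately show ?thesis by (simp only:)
  qed
  have a: "map (\<lambda>k. z k ((i @ t) ! k)) [0..<length i] = map (\<lambda>k. z k (i ! k)) [0..<length i]"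
    by (rule map_cong) (auto simp: nth_append)
  have b: "map (\<lambda>k. z k ((i @ t) ! k)) (map (\<lambda>k. length i + k) [0..<length t])
      = map (\<lambda>k. z (length i + k) (t ! k)) [0..<length t]"
    by (simp add: nth_append)
  show ?thesis unfolding zlab_def length_append u map_append a b ..
qed

lemma meas_sum_int:
  fixes f :: "'i \<Rightarrow> 'a \<Rightarrow> int"
  assumes "finite A" "\<And>j. j \<in> A \<Longrightarrow> f j \<in> measurable M (count_space UNIV)"
  shows "(\<lambda>\<omega>. \<Sum>j\<in>A. f j \<omega>) \<in> measurable M (count_space UNIV)"
  using assms
proof (induction A rule: finite_induct)
  case empty
  show ?case by (simp only: sum.empty) (rule measurable_const, simp)
next
  case (insert a A)
  have h: "(\<lambda>\<omega>. \<Sum>j\<in>A. f j \<omega>) \<in> measurable M (count_space UNIV)"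
    by (rule insert.IH) (rule insert.prems, blast)
  have fa: "f a \<in> measurable M (count_space UNIV)" by (rule insert.prems) blast
  have hv: "(\<lambda>\<omega>. v + (\<Sum>j\<in>A. f j \<omega>)) \<in> measurable M (count_space UNIV)" for v :: int
    using measurable_compose[OF h measurable_count_space[of "\<lambda>x. v + x" UNIV]] .
  have fa': "f a \<in> measurable M (count_space (UNIV::int set))" by (rule fa)
  have "(\<lambda>\<omega>. f a \<omega> + (\<Sum>j\<in>A. f j \<omega>)) \<in> measurable M (count_space UNIV)"
    by (rule measurable_compose_countable'[where f="\<lambda>v \<omega>. v + (\<Sum>j\<in>A. f j \<omega>)", OF hv fa' countableI_type])
  moreover have "(\<lambda>\<omega>. \<Sum>j\<in>insert a A. f j \<omega>) = (\<lambda>\<omega>. f a \<omega> + (\<Sum>j\<in>A. f j \<omega>))"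
    using insert.hyps by simp
  ultimately show ?case by (simp only:)
qed

lemma (in prob_space) subPoisson_sum:
  fixes X :: "'i \<Rightarrow> 'a \<Rightarrow> real"
  assumes fin: "finite J" and ind: "indep_vars (\<lambda>_. borel) X J"
    and sp: "\<And>j. j \<in> J \<Longrightarrow> sub_Poisson M (X j) \<rho>"
  shows "sub_Poisson M (\<lambda>x. \<Sum>j\<in>J. X j x) (real (card J) * \<rho>)"
proof -
  define m where "m j = (\<integral>y. X j y \<partial>M)" for j
  have int: "\<And>j. j \<in> J \<Longrightarrow> integrable M (X j)" using sp by (simp add: sub_Poisson_def)
  have E: "(\<integral>y. (\<Sum>j\<in>J. X j y) \<partial>M) = (\<Sum>j\<in>J. m j)"
    unfolding m_def using int by (subst Bochner_Integration.integral_sum) auto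
  have intS: "integrable M (\<lambda>x. \<Sum>j\<in>J. X j x)" using int by auto
  have mgf: "(\<integral>\<^sup>+x. ennreal (exp (l * ((\<Sum>j\<in>J. X j x) - (\<Sum>j\<in>J. m j)))) \<partial>M)
      \<le> ennreal (exp (real (card J) * \<rho> * (exp \<bar>l\<bar> - 1 - \<bar>l\<bar>)))" for l
  proof -
    define c where "c = exp \<bar>l\<bar> - 1 - \<bar>l\<bar>"
    define g where "g j x = exp (l * (X j x - m j))" for j x
    have spb: "(\<integral>\<^sup>+x. ennreal (g j x) \<partial>M) \<le> ennreal (exp (\<rho> * c))" if "j \<in> J" for j
      using sp[OF that] unfolding sub_Poisson_def g_def m_def c_def by blast
    have gm: "g j \<in> borel_measurable M" if "j \<in> J" for j
      using borel_measurable_integrable[OF int[OF that]] unfolding g_def by measurable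
    have gi: "integrable M (g j)" if "j \<in> J" for j
    proof (rule integrableI_nonneg)
      show "(\<integral>\<^sup>+x. ennreal (g j x) \<partial>M) < \<infinity>"
        using spb[OF that] by (simp add: le_less_trans)
    qed (use gm[OF that] in \<open>auto simp: g_def\<close>)
    have gle: "(\<integral>x. g j x \<partial>M) \<le> exp (\<rho> * c)" if "j \<in> J" for j
    proof -
      have eq: "(\<integral>\<^sup>+x. ennreal (g j x) \<partial>M) = ennreal (\<integral>x. g j x \<partial>M)"
        by (rule nn_integral_eq_integral[OF gi[OF that]]) (simp add: g_def)
      have "ennreal (\<integral>x. g j x \<partial>M) \<le> ennreal (exp (\<rho> * c))"
        using spb[OF that] unfolding eq .
      then show ?thesis by (simp add: ennreal_le_iff)
    qed
    have indg: "indep_vars (\<lambda>_. borel) g J"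
      using indep_vars_compose2[OF ind, of "\<lambda>j v. exp (l * (v - m j))" "\<lambda>_. borel"]
      unfolding g_def by simp
    have eqexp: "exp (l * ((\<Sum>j\<in>J. X j x) - (\<Sum>j\<in>J. m j))) = (\<Prod>j\<in>J. g j x)" for x
      unfolding g_def using fin
      by (simp add: exp_sum[symmetric] sum_subtractf[symmetric] sum_distrib_left)
    have "(\<integral>\<^sup>+x. ennreal (exp (l * ((\<Sum>j\<in>J. X j x) - (\<Sum>j\<in>J. m j)))) \<partial>M)
        = (\<integral>\<^sup>+x. ennreal (\<Prod>j\<in>J. g j x) \<partial>M)" by (simp add: eqexp)
    also have "\<dots> = ennreal (\<integral>x. (\<Prod>j\<in>J. g j x) \<partial>M)"
      by (rule nn_integral_eq_integral[OF indep_vars_integrable[OF fin indg gi]])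
         (auto simp: g_def prod_nonneg)
    also have "\<dots> = ennreal (\<Prod>j\<in>J. \<integral>x. g j x \<partial>M)"
      by (simp add: indep_vars_lebesgue_integral[OF fin indg gi])
    also have "\<dots> \<le> ennreal (\<Prod>j\<in>J. exp (\<rho> * c))"
      by (intro ennreal_leI prod_mono conjI gle integral_nonneg_AE) (auto simp: g_def)
    also have "\<dots> = ennreal (exp (real (card J) * \<rho> * c))"
      by (simp add: exp_of_nat_mult[symmetric] mult.assoc)
    finally show ?thesis unfolding c_def .
  qed
  have absb: "(\<integral>x. \<bar>(\<Sum>j\<in>J. X j x) - (\<Sum>j\<in>J. m j)\<bar> \<partial>M) \<le> real (card J) * \<rho>"
  proof -
    have "(\<integral>x. \<bar>(\<Sum>j\<in>J. X j x) - (\<Sum>j\<in>J. m j)\<bar> \<partial>M) \<le> (\<integral>x. (\<Sum>j\<in>J. \<bar>X j x - m j\<bar>) \<partial>M)"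
    proof (rule integral_mono)
      show "integrable M (\<lambda>x. \<bar>(\<Sum>j\<in>J. X j x) - (\<Sum>j\<in>J. m j)\<bar>)"
        using intS by auto
      show "integrable M (\<lambda>x. \<Sum>j\<in>J. \<bar>X j x - m j\<bar>)"
        using int by auto
      fix x show "\<bar>(\<Sum>j\<in>J. X j x) - (\<Sum>j\<in>J. m j)\<bar> \<le> (\<Sum>j\<in>J. \<bar>X j x - m j\<bar>)"
        by (simp add: sum_subtractf[symmetric] sum_abs)
    qed
    also have "\<dots> = (\<Sum>j\<in>J. \<integral>x. \<bar>X j x - m j\<bar> \<partial>M)"
      using int by (subst Bochner_Integration.integral_sum) auto
    also have "\<dots> \<le> (\<Sum>j\<in>J. \<rho>)"
      by (rule sum_mono) (use sp in \<open>auto simp: sub_Poisson_def m_def\<close>)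
    finally show ?thesis by simp
  qed
  show ?thesis unfolding sub_Poisson_def E by (intro conjI allI intS mgf absb)
qed


theorem theorem3p2:
  fixes M :: "'a measure" and d d' :: nat and n r :: "nat \<Rightarrow> nat" and \<rho> :: real
    and S :: "nat list \<Rightarrow> real" and z :: "nat \<Rightarrow> nat \<Rightarrow> nat"
    and Y :: "'a \<Rightarrow> nat list \<Rightarrow> int"
  assumes "prob_space M"
    and "\<forall>k<d. 0 < n k"
    and "1 \<le> d'" and "d' < d"
    and "TBM M d n r \<rho> S z Y"
    and "\<forall>i\<in>idxs n d. sub_Poisson M (\<lambda>x. real_of_int (Y x i)) \<rho>"
  shows "let N = (\<Prod>k\<in>{d'..<d}. n k);
             T = idxs (\<lambda>k. n (d' + k)) (d - d');
             Y' = (\<lambda>x i. \<Sum>t\<in>T. Y x (i @ t));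
             S' = (\<lambda>j. (1 / real N) *
                    (\<Sum>t\<in>T. S (j @ map (\<lambda>k. z (d' + k) (t ! k)) [0..<d - d'])))
         in TBM M d' n r (real N * \<rho>) S' z Y'
            \<and> (\<forall>i\<in>idxs n d'. sub_Poisson M (\<lambda>x. real_of_int (Y' x i)) (real N * \<rho>))"
proof -
  interpret P: prob_space M by (rule assms(1))
  have rho: "0 \<le> \<rho>" and Sb: "\<forall>j\<in>idxs r d. S j \<in> {-1..1}" and zb: "\<forall>k<d. \<forall>i<n k. z k i < r k"
    and ind: "P.indep_vars (\<lambda>_. count_space UNIV) (\<lambda>i x. Y x i) (idxs n d)"
    and mom: "\<forall>i\<in>idxs n d. integrable M (\<lambda>x. real_of_int (Y x i)) \<and>
        (\<integral>x. real_of_int (Y x i) \<partial>M) = \<rho> * S (zlab z i)"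
    using assms(5) unfolding TBM_def by auto
  define N where "N = (\<Prod>k\<in>{d'..<d}. n k)"
  define T where "T = idxs (\<lambda>k. n (d' + k)) (d - d')"
  define Y' where "Y' = (\<lambda>x i. \<Sum>t\<in>T. Y x (i @ t))"
  define S' where "S' = (\<lambda>j. (1 / real N) * (\<Sum>t\<in>T. S (j @ map (\<lambda>k. z (d' + k) (t ! k)) [0..<d - d'])))"
  have finT: "finite T" using idxs_card unfolding T_def by blast
  have cardT: "card T = N"
  proof -
    have "card T = (\<Prod>k<d-d'. n (d'+k))" using idxs_card unfolding T_def by blast
    also have "\<dots> = (\<Prod>k\<in>{d'..<d}. n k)"
    proof -
      have "(\<Prod>k\<in>{d'..<d}. n k) = (\<Prod>k\<in>{0+d'..<(d-d')+d'}. n k)" using assms(4) by simp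
      also have "\<dots> = (\<Prod>k\<in>{0..<d-d'}. n (k+d'))" by (rule prod.shift_bounds_nat_ivl)
      finally show ?thesis by (simp add: lessThan_atLeast0 add.commute)
    qed
    finally show ?thesis unfolding N_def .
  qed
  have Npos: "0 < N" unfolding N_def using assms(2) by (auto intro: prod_pos)
  have app: "i @ t \<in> idxs n d" if "i \<in> idxs n d'" "t \<in> T" for i t
    using idxs_append[OF that(1) that(2)[unfolded T_def]] assms(4) by simp
  have lenT: "length t = d - d'" if "t \<in> T" for t using that by (simp add: T_def idxs_def)
  have leni: "length i = d'" if "i \<in> idxs n d'" for i using that by (simp add: idxs_def)
  define J where "J i = (\<lambda>t. i @ t) ` T" for i
  have injT: "inj_on (\<lambda>t. i @ t) T" for i :: "nat list" by (auto simp: inj_on_def)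
  have Y'J: "Y' x i = (\<Sum>j\<in>J i. Y x j)" for x i
    unfolding Y'_def J_def by (simp add: sum.reindex[OF injT])
  have finJ: "finite (J i)" for i unfolding J_def using finT by simp
  have cardJ: "card (J i) = N" for i unfolding J_def using card_image[OF injT] cardT by simp
  have JS: "J i \<subseteq> idxs n d" if "i \<in> idxs n d'" for i unfolding J_def using app[OF that] by auto
  have S'b: "\<forall>j\<in>idxs r d'. S' j \<in> {-1..1}"
  proof
    fix j assume j: "j \<in> idxs r d'"
    have mem: "j @ map (\<lambda>k. z (d'+k) (t!k)) [0..<d-d'] \<in> idxs r d" if t: "t \<in> T" for t
    proof (rule idxs_append[OF j])
      show "map (\<lambda>k. z (d'+k) (t!k)) [0..<d-d'] \<in> idxs (\<lambda>k. r (d'+k)) (d-d')"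
        unfolding idxs_def
      proof (intro CollectI conjI allI impI)
        fix k assume k': "k < d - d'"
        have "t ! k < n (d'+k)" using t k' unfolding T_def idxs_def by auto
        moreover have "d' + k < d" using k' by simp
        ultimately have "z (d'+k) (t!k) < r (d'+k)" using zb by blast
        then show "map (\<lambda>k. z (d'+k) (t!k)) [0..<d-d'] ! k < r (d'+k)" using k' by simp
      qed simp
      show "d' \<le> d" using assms(4) by simp
    qed
    have "\<bar>\<Sum>t\<in>T. S (j @ map (\<lambda>k. z (d'+k) (t!k)) [0..<d-d'])\<bar> \<le> (\<Sum>t\<in>T. 1)"
    proof (rule order_trans[OF sum_abs], rule sum_mono)
      fix t assume "t \<in> T"
      then have "S (j @ map (\<lambda>k. z (d'+k) (t!k)) [0..<d-d']) \<in> {-1..1}" using Sb mem by blast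
      then show "\<bar>S (j @ map (\<lambda>k. z (d'+k) (t!k)) [0..<d-d'])\<bar> \<le> 1" by auto
    qed
    then have "\<bar>\<Sum>t\<in>T. S (j @ map (\<lambda>k. z (d'+k) (t!k)) [0..<d-d'])\<bar> \<le> real N" using cardT by simp
    then have "\<bar>S' j\<bar> \<le> 1" unfolding S'_def using Npos by (simp add: abs_mult field_simps)
    then show "S' j \<in> {-1..1}" by auto
  qed
  have zb': "\<forall>k<d'. \<forall>i<n k. z k i < r k" using zb assms(4) by auto
  have disj: "disjoint_family_on J (idxs n d')"
    unfolding disjoint_family_on_def J_def using leni by (auto simp: append_eq_append_conv)
  have R: "P.indep_vars (\<lambda>i. PiM (J i) (\<lambda>_. count_space UNIV)) (\<lambda>i \<omega>. restrict (\<lambda>j. Y \<omega> j) (J i)) (idxs n d')"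
    by (rule P.indep_vars_restrict[OF ind JS disj])
  have hm: "(\<lambda>\<omega>. \<Sum>j\<in>J i. \<omega> j) \<in> measurable (PiM (J i) (\<lambda>_. count_space UNIV)) (count_space (UNIV :: int set))" for i
    by (rule meas_sum_int[OF finJ]) (rule measurable_component_singleton)
  have "P.indep_vars (\<lambda>_. count_space UNIV) (\<lambda>i \<omega>. (\<lambda>\<omega>. \<Sum>j\<in>J i. \<omega> j) (restrict (\<lambda>j. Y \<omega> j) (J i))) (idxs n d')"
    by (rule P.indep_vars_compose2[OF R hm])
  moreover have "(\<lambda>i \<omega>. (\<lambda>\<omega>. \<Sum>j\<in>J i. \<omega> j) (restrict (\<lambda>j. Y \<omega> j) (J i))) = (\<lambda>i x. Y' x i)"
  proof (intro ext)
    fix i \<omega>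
    have "(\<Sum>j\<in>J i. restrict (\<lambda>j. Y \<omega> j) (J i) j) = (\<Sum>j\<in>J i. Y \<omega> j)" by (rule sum.cong) auto
    then show "(\<lambda>\<omega>. \<Sum>j\<in>J i. \<omega> j) (restrict (\<lambda>j. Y \<omega> j) (J i)) = Y' \<omega> i" by (simp add: Y'J)
  qed
  ultimately have indY': "P.indep_vars (\<lambda>_. count_space UNIV) (\<lambda>i x. Y' x i) (idxs n d')" by simp
  have Y'R: "real_of_int (Y' x i) = (\<Sum>j\<in>J i. real_of_int (Y x j))" for x i by (simp add: Y'J)
  have momY': "integrable M (\<lambda>x. real_of_int (Y' x i)) \<and>
      (\<integral>x. real_of_int (Y' x i) \<partial>M) = real N * \<rho> * S' (zlab z i)" if i: "i \<in> idxs n d'" for i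
  proof
    have XI: "j \<in> J i \<Longrightarrow> integrable M (\<lambda>x. real_of_int (Y x j))" for j using mom JS[OF i] by blast
    show "integrable M (\<lambda>x. real_of_int (Y' x i))" unfolding Y'R using XI by auto
    have "(\<integral>x. real_of_int (Y' x i) \<partial>M) = (\<Sum>j\<in>J i. \<integral>x. real_of_int (Y x j) \<partial>M)"
      unfolding Y'R using XI by (subst Bochner_Integration.integral_sum) auto
    also have "\<dots> = (\<Sum>j\<in>J i. \<rho> * S (zlab z j))"
      by (rule sum.cong) (use mom JS[OF i] in auto)
    also have "\<dots> = (\<Sum>t\<in>T. \<rho> * S (zlab z (i @ t)))"
      unfolding J_def by (simp add: sum.reindex[OF injT])
    also have "\<dots> = (\<Sum>t\<in>T. \<rho> * S (zlab z i @ map (\<lambda>k. z (d' + k) (t ! k)) [0..<d - d']))"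
      by (rule sum.cong) (simp_all add: zlab_append leni[OF i] lenT)
    also have "\<dots> = real N * \<rho> * S' (zlab z i)"
      unfolding S'_def using Npos by (simp add: sum_distrib_left)
    finally show "(\<integral>x. real_of_int (Y' x i) \<partial>M) = real N * \<rho> * S' (zlab z i)" .
  qed
  have spY': "sub_Poisson M (\<lambda>x. real_of_int (Y' x i)) (real N * \<rho>)" if i: "i \<in> idxs n d'" for i
  proof -
    have "P.indep_vars (\<lambda>_. borel) (\<lambda>j x. real_of_int (Y x j)) (J i)"
      using P.indep_vars_compose2[OF P.indep_vars_subset[OF ind JS[OF i]], of "\<lambda>j v. real_of_int v" "\<lambda>_. borel"]
      by simp
    from P.subPoisson_sum[OF finJ this] have
      "sub_Poisson M (\<lambda>x. \<Sum>j\<in>J i. real_of_int (Y x j)) (real (card (J i)) * \<rho>)"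
      using assms(6) JS[OF i] by blast
    then show ?thesis unfolding Y'R cardJ .
  qed
  have main: "TBM M d' n r (real N * \<rho>) S' z Y' \<and>
      (\<forall>i\<in>idxs n d'. sub_Poisson M (\<lambda>x. real_of_int (Y' x i)) (real N * \<rho>))"
    unfolding TBM_def using rho S'b zb' indY' momY' spY' by (simp add: mult.assoc)
  show ?thesis unfolding Let_def using main unfolding Y'_def S'_def T_def N_def .
qed

end
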